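(* Let $N\ge 2$ and $0<\gamma_1\le\dots\le\gamma_N$, and let $S$ be the star centered at vertex $1$. Then for every spanning tree $T'$ on $\{1,\dots,N\}$, $$R_{\mathrm s}(S)-R_{\mathrm s}(T')\le \frac{1}{2}\log_2\!\Big(\Big(\frac{\gamma_N(1+2\gamma_1)}{\gamma_1(1+2\gamma_N)}\Big)^{N}\Big),$$ and consequently $\sup_{T'}\big(R_{\mathrm s}(S)-R_{\mathrm s}(T')\big)\to 0$ as $\gamma_1\to\infty$ (with $N$ fixed and $\gamma_1\le\dots\le\gamma_N$).
   Context: For distinct $i,j$ put $\varphi(i,j)=\log_2\!\big(\gamma_i+\frac{\gamma_i}{\gamma_i+\gamma_j}\big)$. For a spanning tree $T$ on $\{1,\dots,N\}$ with neighbor sets $A_i^T$, define $R_{\mathrm s}(T)=\frac{1}{2(N-1)}\sum_{i=1}^N \min_{j\in A_i^T}\varphi(i,j)$. *)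

theory Defs
  imports Complex_Main
begin

definition tree_edges_on :: "nat \<Rightarrow> nat set set" where
  "tree_edges_on N = {{i, j} | i j. i \<in> {1..N} \<and> j \<in> {1..N} \<and> i \<noteq> j}"

definition edge_rel :: "nat set set \<Rightarrow> (nat \<times> nat) set" where
  "edge_rel T = {(i, j). {i, j} \<in> T}"

definition is_spanning_tree :: "nat \<Rightarrow> nat set set \<Rightarrow> bool" where
  "is_spanning_tree N T \<longleftrightarrow>
     T \<subseteq> tree_edges_on N \<and> card T = N - 1 \<and>
     (\<forall>i\<in>{1..N}. \<forall>j\<in>{1..N}. (i, j) \<in> (edge_rel T)\<^sup>*)"

definition nbrs :: "nat set set \<Rightarrow> nat \<Rightarrow> nat set" where
  "nbrs T i = {j. {i, j} \<in> T \<and> j \<noteq> i}"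

definition phi :: "(nat \<Rightarrow> real) \<Rightarrow> nat \<Rightarrow> nat \<Rightarrow> real" where
  "phi \<gamma> i j = log 2 (\<gamma> i + \<gamma> i / (\<gamma> i + \<gamma> j))"

definition Rs :: "nat \<Rightarrow> (nat \<Rightarrow> real) \<Rightarrow> nat set set \<Rightarrow> real" where
  "Rs N \<gamma> T = 1 / (2 * (real N - 1)) * (\<Sum>i = 1..N. Min (phi \<gamma> i ` nbrs T i))"

definition star :: "nat \<Rightarrow> nat set set" where
  "star N = {{1, j} | j. j \<in> {2..N}}"

end

theory Submission
  imports Defs
begin

lemma mono_gamma:
  fixes \<gamma> :: "nat \<Rightarrow> real"
  assumes mono: "\<forall>i\<in>{1..<N}. \<gamma> i \<le> \<gamma> (Suc i)"
  shows "1 \<le> i \<Longrightarrow> i + k \<le> N \<Longrightarrow> \<gamma> i \<le> \<gamma> (i + k)"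
proof (induction k)
  case 0 then show ?case by simp
next
  case (Suc k)
  then have "\<gamma> i \<le> \<gamma> (i + k)" by simp
  also have "\<gamma> (i+k) \<le> \<gamma> (Suc (i+k))" using mono Suc.prems by auto
  finally show ?case by simp
qed

lemma gamma_range:
  fixes \<gamma> :: "nat \<Rightarrow> real"
  assumes mono: "\<forall>i\<in>{1..<N}. \<gamma> i \<le> \<gamma> (Suc i)" and j: "j \<in> {1..N}"
  shows "\<gamma> 1 \<le> \<gamma> j" "\<gamma> j \<le> \<gamma> N"
proof -
  show "\<gamma> 1 \<le> \<gamma> j" using mono_gamma[OF mono, of 1 "j - 1"] j by auto
  show "\<gamma> j \<le> \<gamma> N" using mono_gamma[OF mono, of j "N - j"] j by auto
qed

lemma frac_lemma: "(gi::real) > 0 \<Longrightarrow> a > 0 \<Longrightarrow> b > 0 \<Longrightarrow> X > 0 \<Longrightarrow> Y > 0 \<Longrightarrow> (gi*X/a)/(gi*Y/b) = (X/a)*(b/Y)"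
  by (simp add: divide_simps)

lemma ratio_bound:
  fixes g1 gi gN :: real
  assumes "0 < g1" "g1 \<le> gi" "gi \<le> gN"
  shows "(gi + gi/(gi+g1)) / (gi + gi/(gi+gN)) \<le> (gN * (1 + 2 * g1)) / (g1 * (1 + 2 * gN))"
proof -
  have e1: "(gi + gi/(gi+g1)) / (gi + gi/(gi+gN)) = ((gi+g1+1)/(gi+g1)) * ((gi+gN)/(gi+gN+1))"
  proof -
    have p1: "gi + gi/(gi+g1) = gi*(gi+g1+1)/(gi+g1)" using assms by (simp add: field_simps)
    have p2: "gi + gi/(gi+gN) = gi*(gi+gN+1)/(gi+gN)" using assms by (simp add: field_simps)
    have q: "gi > 0" "gi+g1>0" "gi+gN>0" "gi+gN+1>0" "gi+g1+1>0" using assms by auto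
    show ?thesis unfolding p1 p2 using q by (subst frac_lemma) auto
  qed
  have e2: "(gN * (1 + 2 * g1)) / (g1 * (1 + 2 * gN)) = ((2*g1+1)/(2*g1)) * ((2*gN)/(2*gN+1))"
    using assms by (simp add: divide_simps) (simp add: algebra_simps)
  have f1: "(gi+g1+1)/(gi+g1) \<le> (2*g1+1)/(2*g1)"
    using assms by (simp add: field_simps)
  have f2: "(gi+gN)/(gi+gN+1) \<le> (2*gN)/(2*gN+1)"
    using assms by (simp add: field_simps)
  show ?thesis unfolding e1 e2
    by (rule mult_mono[OF f1 f2]) (use assms in auto)
qed

lemma nbrs_sub: "T \<subseteq> tree_edges_on N \<Longrightarrow> nbrs T i \<subseteq> {1..N}"
  unfolding nbrs_def tree_edges_on_def by (auto simp: doubleton_eq_iff)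

lemma nbrs_ne:
  assumes "is_spanning_tree N T" "N \<ge> 2" "i \<in> {1..N}"
  shows "nbrs T i \<noteq> {}"
proof -
  obtain j where j: "j \<in> {1..N}" "j \<noteq> i"
  proof (cases "i = 1")
    case True then show ?thesis using that[of 2] assms(2) by simp
  next
    case False then show ?thesis using that[of 1] assms(2) by simp
  qed
  have "(i, j) \<in> (edge_rel T)\<^sup>*" using assms j unfolding is_spanning_tree_def by auto
  then obtain k where k: "(i, k) \<in> edge_rel T" using j(2)
    by (metis converse_rtranclE)
  have sub: "T \<subseteq> tree_edges_on N" using assms unfolding is_spanning_tree_def by auto
  have "{i,k} \<in> T" using k unfolding edge_rel_def by auto
  moreover have "k \<noteq> i" using calculation sub unfolding tree_edges_on_def
    by (auto simp: doubleton_eq_iff)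
  ultimately show ?thesis unfolding nbrs_def by auto
qed

lemma star_tree: "N \<ge> 2 \<Longrightarrow> is_spanning_tree N (star N)"
proof -
  assume N: "N \<ge> 2"
  have sub: "star N \<subseteq> tree_edges_on N"
  proof
    fix x assume "x \<in> star N"
    then obtain j where j: "x = {1,j}" "j \<in> {2..N}" unfolding star_def by auto
    show "x \<in> tree_edges_on N" unfolding tree_edges_on_def j(1)
      apply (rule CollectI) apply (rule exI[of _ 1], rule exI[of _ j]) using j(2) by auto
  qed
  have img: "star N = (\<lambda>j. {1, j}) ` {2..N}" unfolding star_def by auto
  have "inj_on (\<lambda>j. {1::nat, j}) {2..N}" by (auto simp: inj_on_def doubleton_eq_iff)
  then have card: "card (star N) = N - 1" unfolding img by (simp add: card_image)
  have to1: "(j, 1) \<in> (edge_rel (star N))\<^sup>*" if "j \<in> {1..N}" for j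
  proof (cases "j = 1")
    case False
    have "{1,j} \<in> star N" unfolding star_def using that False by auto
    then have "(j, 1) \<in> edge_rel (star N)" unfolding edge_rel_def by (simp add: insert_commute)
    then show ?thesis by auto
  qed simp
  have from1: "(1, j) \<in> (edge_rel (star N))\<^sup>*" if "j \<in> {1..N}" for j
  proof (cases "j = 1")
    case False
    have "{1,j} \<in> star N" unfolding star_def using that False by auto
    then have "(1, j) \<in> edge_rel (star N)" unfolding edge_rel_def by simp
    then show ?thesis by auto
  qed simp
  show ?thesis unfolding is_spanning_tree_def using sub card to1 from1
    using rtrancl_trans[OF to1 from1] by blast
qed

lemma vertex_bound:
  fixes \<gamma> :: "nat \<Rightarrow> real"
  assumes pos: "0 < \<gamma> 1" and mono: "\<forall>i\<in>{1..<N}. \<gamma> i \<le> \<gamma> (Suc i)"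
    and S: "is_spanning_tree N S" and T: "is_spanning_tree N T" and N: "N \<ge> 2"
    and i: "i \<in> {1..N}"
  shows "Min (phi \<gamma> i ` nbrs S i) - Min (phi \<gamma> i ` nbrs T i)
     \<le> log 2 ((\<gamma> N * (1 + 2 * \<gamma> 1)) / (\<gamma> 1 * (1 + 2 * \<gamma> N)))"
proof -
  have gi: "\<gamma> 1 \<le> \<gamma> i" "\<gamma> i \<le> \<gamma> N" using gamma_range[OF mono i] by auto
  have subS: "nbrs S i \<subseteq> {1..N}" using S nbrs_sub unfolding is_spanning_tree_def by auto
  have subT: "nbrs T i \<subseteq> {1..N}" using T nbrs_sub unfolding is_spanning_tree_def by auto
  have finS: "finite (nbrs S i)" using subS finite_subset by blast
  have finT: "finite (nbrs T i)" using subT finite_subset by blast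
  obtain j where j: "j \<in> nbrs S i" using nbrs_ne[OF S N i] by blast
  have "Min (phi \<gamma> i ` nbrs T i) \<in> phi \<gamma> i ` nbrs T i"
    using finT nbrs_ne[OF T N i] by (intro Min_in) auto
  then obtain k where k: "k \<in> nbrs T i" "Min (phi \<gamma> i ` nbrs T i) = phi \<gamma> i k" by auto
  have gj: "\<gamma> 1 \<le> \<gamma> j" using gamma_range(1)[OF mono] j subS by auto
  have gk: "\<gamma> k \<le> \<gamma> N" using gamma_range(2)[OF mono] k subT by auto
  have gk1: "\<gamma> 1 \<le> \<gamma> k" using gamma_range(1)[OF mono] k subT by auto
  define A where "A = \<gamma> i + \<gamma> i / (\<gamma> i + \<gamma> 1)"
  define B where "B = \<gamma> i + \<gamma> i / (\<gamma> i + \<gamma> N)"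
  have Bpos: "0 < B" unfolding B_def using pos gi by (auto intro!: add_pos_nonneg)
  have Apos: "0 < A" unfolding A_def using pos gi by (auto intro!: add_pos_nonneg)
  have "Min (phi \<gamma> i ` nbrs S i) \<le> phi \<gamma> i j" using finS j by auto
  also have "\<dots> \<le> log 2 A" unfolding phi_def A_def
  proof (rule log_le_cancel_iff[THEN iffD2])
    show "0 < \<gamma> i + \<gamma> i / (\<gamma> i + \<gamma> j)" using pos gi gj by (auto intro!: add_pos_nonneg)
    show "0 < \<gamma> i + \<gamma> i / (\<gamma> i + \<gamma> 1)" using pos gi by (auto intro!: add_pos_nonneg)
    show "\<gamma> i + \<gamma> i / (\<gamma> i + \<gamma> j) \<le> \<gamma> i + \<gamma> i / (\<gamma> i + \<gamma> 1)"
      using pos gi gj by (auto intro!: divide_left_mono mult_pos_pos)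
  qed simp
  finally have h1: "Min (phi \<gamma> i ` nbrs S i) \<le> log 2 A" .
  have "log 2 B \<le> phi \<gamma> i k" unfolding phi_def B_def
  proof (rule log_le_cancel_iff[THEN iffD2])
    show "0 < \<gamma> i + \<gamma> i / (\<gamma> i + \<gamma> k)" using pos gi gk1 by (auto intro!: add_pos_nonneg)
    show "0 < \<gamma> i + \<gamma> i / (\<gamma> i + \<gamma> N)" using pos gi by (auto intro!: add_pos_nonneg)
    show "\<gamma> i + \<gamma> i / (\<gamma> i + \<gamma> N) \<le> \<gamma> i + \<gamma> i / (\<gamma> i + \<gamma> k)"
      using pos gi gk gk1 by (auto intro!: divide_left_mono mult_pos_pos)
  qed simp
  then have h2: "log 2 B \<le> Min (phi \<gamma> i ` nbrs T i)" using k by simp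
  have "log 2 A - log 2 B = log 2 (A / B)" using Apos Bpos by (simp add: log_divide)
  also have "\<dots> \<le> log 2 ((\<gamma> N * (1 + 2 * \<gamma> 1)) / (\<gamma> 1 * (1 + 2 * \<gamma> N)))"
    unfolding A_def B_def
    using ratio_bound[OF pos gi] Apos Bpos pos gi
    by (subst log_le_cancel_iff) (auto simp: A_def B_def intro!: mult_pos_pos divide_pos_pos add_pos_nonneg)
  finally show ?thesis using h1 h2 by linarith
qed

lemma r_facts:
  fixes g1 gN :: real
  assumes "0 < g1" "g1 \<le> gN"
  shows "1 \<le> (gN * (1 + 2 * g1)) / (g1 * (1 + 2 * gN))"
    "(gN * (1 + 2 * g1)) / (g1 * (1 + 2 * gN)) \<le> 1 + 1 / (2 * g1)"
proof -
  have p: "g1 * (1 + 2 * gN) > 0" using assms by auto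
  show "1 \<le> (gN * (1 + 2 * g1)) / (g1 * (1 + 2 * gN))"
    using p assms by (simp add: divide_simps) (simp add: algebra_simps)
  show "(gN * (1 + 2 * g1)) / (g1 * (1 + 2 * gN)) \<le> 1 + 1 / (2 * g1)"
    using p assms by (simp add: divide_simps) (simp add: algebra_simps)
qed

lemma part1:
  fixes \<gamma> :: "nat \<Rightarrow> real"
  assumes N: "N \<ge> 2" and pos: "0 < \<gamma> 1" and mono: "\<forall>i\<in>{1..<N}. \<gamma> i \<le> \<gamma> (Suc i)"
    and T: "is_spanning_tree N T"
  shows "Rs N \<gamma> (star N) - Rs N \<gamma> T
     \<le> 1 / 2 * log 2 (((\<gamma> N * (1 + 2 * \<gamma> 1)) / (\<gamma> 1 * (1 + 2 * \<gamma> N))) ^ N)"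
proof -
  define r where "r = (\<gamma> N * (1 + 2 * \<gamma> 1)) / (\<gamma> 1 * (1 + 2 * \<gamma> N))"
  define L where "L = log 2 r"
  have g1N: "\<gamma> 1 \<le> \<gamma> N" using gamma_range[OF mono, of N] N by auto
  have r1: "1 \<le> r" unfolding r_def using r_facts[OF pos g1N] by simp
  have L0: "0 \<le> L" unfolding L_def using r1 by simp
  have S: "is_spanning_tree N (star N)" using star_tree N by auto
  define d where "d = (\<lambda>i. Min (phi \<gamma> i ` nbrs (star N) i) - Min (phi \<gamma> i ` nbrs T i))"
  have vb: "d i \<le> L" if "i \<in> {1..N}" for i
    unfolding d_def L_def r_def using vertex_bound[OF pos mono S T N that] .
  have sumb: "(\<Sum>i=1..N. d i) \<le> real N * L"
    using sum_bounded_above[of "{1..N}" d L] vb by auto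
  define c where "c = 1 / (2 * (real N - 1))"
  have c0: "0 \<le> c" "c \<le> 1/2" using N unfolding c_def by (auto simp: divide_simps)
  have "Rs N \<gamma> (star N) - Rs N \<gamma> T = c * (\<Sum>i=1..N. d i)"
    unfolding Rs_def c_def d_def by (simp add: sum_subtractf right_diff_distrib)
  also have "\<dots> \<le> c * (real N * L)" using c0 sumb by (simp add: mult_left_mono)
  also have "\<dots> \<le> 1/2 * (real N * L)" using c0 L0 by (intro mult_right_mono) auto
  also have "\<dots> = 1 / 2 * log 2 (r ^ N)" unfolding L_def using r1 by (simp add: log_nat_power)
  finally show ?thesis unfolding r_def .
qed

lemma small:
  fixes g1 gN :: real
  assumes "0 < g1" "g1 \<le> gN"
  shows "1 / 2 * log 2 (((gN * (1 + 2 * g1)) / (g1 * (1 + 2 * gN))) ^ N) \<le> real N / (4 * g1 * ln 2)"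
proof -
  define r where "r = (gN * (1 + 2 * g1)) / (g1 * (1 + 2 * gN))"
  have r1: "1 \<le> r" "r \<le> 1 + 1/(2*g1)" unfolding r_def using r_facts[OF assms] by auto
  have "log 2 r = ln r / ln 2" by (simp add: log_def)
  also have "\<dots> \<le> ln (1 + 1/(2*g1)) / ln 2"
    using r1 assms by (intro divide_right_mono) auto
  also have "\<dots> \<le> (1/(2*g1)) / ln 2"
    using assms by (intro divide_right_mono ln_add_one_self_le_self) auto
  finally have lr: "log 2 r \<le> (1/(2*g1)) / ln 2" .
  have "1 / 2 * log 2 (r ^ N) = 1/2 * real N * log 2 r" using r1 by (simp add: log_nat_power)
  also have "\<dots> \<le> 1/2 * real N * ((1/(2*g1)) / ln 2)" using lr by (intro mult_left_mono) auto
  also have "\<dots> = real N / (4 * g1 * ln 2)" by simp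
  finally show ?thesis unfolding r_def .
qed

theorem mainTheorem8:
  fixes N :: nat
  assumes "N \<ge> 2"
  shows "(\<forall>\<gamma> :: nat \<Rightarrow> real. 0 < \<gamma> 1 \<longrightarrow> (\<forall>i\<in>{1..<N}. \<gamma> i \<le> \<gamma> (Suc i)) \<longrightarrow>
           (\<forall>T'. is_spanning_tree N T' \<longrightarrow>
              Rs N \<gamma> (star N) - Rs N \<gamma> T'
                \<le> 1 / 2 * log 2 (((\<gamma> N * (1 + 2 * \<gamma> 1)) / (\<gamma> 1 * (1 + 2 * \<gamma> N))) ^ N)))
       \<and> (\<forall>\<epsilon>>0. \<exists>M. \<forall>\<gamma> :: nat \<Rightarrow> real. 0 < \<gamma> 1 \<longrightarrow> (\<forall>i\<in>{1..<N}. \<gamma> i \<le> \<gamma> (Suc i)) \<longrightarrow>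
           \<gamma> 1 \<ge> M \<longrightarrow>
           \<bar>(SUP T'\<in>{T. is_spanning_tree N T}. Rs N \<gamma> (star N) - Rs N \<gamma> T')\<bar> < \<epsilon>)"
proof (intro conjI allI impI)
  fix \<gamma> :: "nat \<Rightarrow> real" and T'
  assume "0 < \<gamma> 1" "\<forall>i\<in>{1..<N}. \<gamma> i \<le> \<gamma> (Suc i)" "is_spanning_tree N T'"
  then show "Rs N \<gamma> (star N) - Rs N \<gamma> T'
                \<le> 1 / 2 * log 2 (((\<gamma> N * (1 + 2 * \<gamma> 1)) / (\<gamma> 1 * (1 + 2 * \<gamma> N))) ^ N)"
    using part1 assms by blast
next
  fix \<epsilon> :: real assume e: "\<epsilon> > 0"
  show "\<exists>M. \<forall>\<gamma> :: nat \<Rightarrow> real. 0 < \<gamma> 1 \<longrightarrow> (\<forall>i\<in>{1..<N}. \<gamma> i \<le> \<gamma> (Suc i)) \<longrightarrow>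
           \<gamma> 1 \<ge> M \<longrightarrow>
           \<bar>(SUP T'\<in>{T. is_spanning_tree N T}. Rs N \<gamma> (star N) - Rs N \<gamma> T')\<bar> < \<epsilon>"
  proof (intro exI allI impI)
    fix \<gamma> :: "nat \<Rightarrow> real"
    assume pos: "0 < \<gamma> 1" and mono: "\<forall>i\<in>{1..<N}. \<gamma> i \<le> \<gamma> (Suc i)"
      and M: "\<gamma> 1 \<ge> real N / (\<epsilon> * ln 2) + 1"
    have g1N: "\<gamma> 1 \<le> \<gamma> N" using gamma_range[OF mono, of N] assms by auto
    define B where "B = 1 / 2 * log 2 (((\<gamma> N * (1 + 2 * \<gamma> 1)) / (\<gamma> 1 * (1 + 2 * \<gamma> N))) ^ N)"
    have ub: "Rs N \<gamma> (star N) - Rs N \<gamma> T' \<le> B" if "T' \<in> {T. is_spanning_tree N T}" for T'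
      using part1[OF assms pos mono] that unfolding B_def by auto
    have Sin: "star N \<in> {T. is_spanning_tree N T}" using star_tree assms by auto
    have bdd: "bdd_above ((\<lambda>T'. Rs N \<gamma> (star N) - Rs N \<gamma> T') ` {T. is_spanning_tree N T})"
      using ub by (intro bdd_aboveI2) auto
    have lo: "0 \<le> (SUP T'\<in>{T. is_spanning_tree N T}. Rs N \<gamma> (star N) - Rs N \<gamma> T')"
      using cSUP_upper[OF Sin bdd] by simp
    have hi: "(SUP T'\<in>{T. is_spanning_tree N T}. Rs N \<gamma> (star N) - Rs N \<gamma> T') \<le> B"
      using Sin ub by (intro cSUP_least) auto
    have "B \<le> real N / (4 * \<gamma> 1 * ln 2)" unfolding B_def by (rule small[OF pos g1N])
    also have "\<dots> < \<epsilon>"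
    proof -
      have l2: "ln (2::real) > 0" by simp
      have "real N / (\<epsilon> * ln 2) < \<gamma> 1" using M by linarith
      then have a: "real N < \<gamma> 1 * (\<epsilon> * ln 2)" using e l2 by (simp add: pos_divide_less_eq)
      have P: "0 < \<gamma> 1 * (\<epsilon> * ln 2)" using pos e l2 by simp
      have eq: "\<epsilon> * (4 * \<gamma> 1 * ln 2) = 4 * (\<gamma> 1 * (\<epsilon> * ln 2))" by (simp add: algebra_simps)
      have "real N < \<epsilon> * (4 * \<gamma> 1 * ln 2)" unfolding eq using a P by linarith
      then show ?thesis using pos l2 by (simp add: pos_divide_less_eq)
    qed
    finally show "\<bar>(SUP T'\<in>{T. is_spanning_tree N T}. Rs N \<gamma> (star N) - Rs N \<gamma> T')\<bar> < \<epsilon>"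
      using lo hi by linarith
  qed
qed

end
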